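(* Let $q\ge 3$, $k\ge 1$ and $h\geq 2$ be integers with $h\le \lfloor q/2\rfloor$. Then $$SO(S_{q,h,k})=(2qk-8k+8)\sqrt{2}+(8k-8)\sqrt{5}.$$
   Context: For a finite simple graph $G$, $SO(G)=\sum_{uv\in E(G)}\sqrt{d_u^2+d_v^2}$, where $d_u$ is the degree of $u$ in $G$ (the Sombor index). The spiro-chain $S_{q,h,k}$ is the chain of $k$ disjoint copies $G_1,\ldots,G_k$ of the cycle $C_q$ with respect to vertices $x_i,y_i\in V(G_i)$ at distance $h$ in $G_i$; i.e. it is obtained from the disjoint union of the $k$ cycles by identifying $y_i$ with $x_{i+1}$ for $i=1,\ldots,k-1$. Thus in each cycle the distance between two consecutive contact vertices is $h$. *)

theory Defs
  imports Complex_Main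
begin

definition degree :: "'a set set \<Rightarrow> 'a \<Rightarrow> nat" where
  "degree E v = card {e \<in> E. v \<in> e}"

text \<open>For an edge e = {u,v} (u \<noteq> v) the inner sum is d_u^2 + d_v^2.\<close>
definition sombor :: "'a set set \<Rightarrow> real" where
  "sombor E = (\<Sum>e\<in>E. sqrt (\<Sum>w\<in>e. (real (degree E w))^2))"

text \<open>Distance in the cycle C_q with vertex set {0..<q}, j adjacent to (j+1) mod q.\<close>
definition cyc_dist :: "nat \<Rightarrow> nat \<Rightarrow> nat \<Rightarrow> nat" where
  "cyc_dist q a b = (let d = (if a \<le> b then b - a else a - b) in min d (q - d))"

text \<open>Spiro chain: copy i (i < k) of C_q has raw vertices (i,j), j < q.
  Contact vertices x i, y i in copy i; y i is identified with x (i+1)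
  for i+1 < k.  spiro_rep sends a raw vertex to its representative.\<close>
definition spiro_rep :: "nat \<Rightarrow> (nat \<Rightarrow> nat) \<Rightarrow> (nat \<Rightarrow> nat) \<Rightarrow> nat \<times> nat \<Rightarrow> nat \<times> nat" where
  "spiro_rep k x y v = (case v of (i, j) \<Rightarrow>
      if i + 1 < k \<and> j = y i then (i + 1, x (i + 1)) else (i, j))"

definition spiro_V :: "nat \<Rightarrow> nat \<Rightarrow> (nat \<Rightarrow> nat) \<Rightarrow> (nat \<Rightarrow> nat) \<Rightarrow> (nat \<times> nat) set" where
  "spiro_V q k x y = spiro_rep k x y ` ({0..<k} \<times> {0..<q})"

definition spiro_E :: "nat \<Rightarrow> nat \<Rightarrow> (nat \<Rightarrow> nat) \<Rightarrow> (nat \<Rightarrow> nat) \<Rightarrow> (nat \<times> nat) set set" where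
  "spiro_E q k x y = {{spiro_rep k x y (i, j), spiro_rep k x y (i, (j + 1) mod q)} | i j. i < k \<and> j < q}"

end

theory Submission
  imports Defs
begin

lemma cyc_facts:
  assumes "3 \<le> q" "a < q" "b < q" "cyc_dist q a b = h" "2 \<le> h"
  shows "a \<noteq> b" "b \<noteq> Suc a mod q" "a \<noteq> Suc b mod q"
  using assms unfolding cyc_dist_def Let_def
  by (auto simp: mod_Suc split: if_splits)

locale spiro =
  fixes q k :: nat and x y :: "nat \<Rightarrow> nat"
  assumes q3: "3 \<le> q"
    and xq: "\<And>i. i < k \<Longrightarrow> x i < q" and yq: "\<And>i. i < k \<Longrightarrow> y i < q"
    and xy: "\<And>i. i < k \<Longrightarrow> x i \<noteq> y i"
    and xy1: "\<And>i. i < k \<Longrightarrow> y i \<noteq> Suc (x i) mod q"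
    and yx1: "\<And>i. i < k \<Longrightarrow> x i \<noteq> Suc (y i) mod q"
begin

definition "f = spiro_rep k x y"
definition "s = (\<lambda>(i::nat,j). (i, Suc j mod q))"
definition "I = {0..<k} \<times> {0..<q}"
definition "ed p = {f p, f (s p)}"

lemma f_eq: "f (i,j) = (if i+1<k \<and> j = y i then (i+1, x(i+1)) else (i,j))"
  by (simp add: f_def spiro_rep_def)

lemma s_eq: "s (i,j) = (i, Suc j mod q)" by (simp add: s_def)

lemma modq[simp]: "Suc j mod q \<noteq> j" "j \<noteq> Suc j mod q" "Suc (Suc j mod q) mod q \<noteq> j" "j \<noteq> Suc (Suc j mod q) mod q" if "j < q"
  using that q3 by (auto simp: mod_Suc)

lemma f_ne: "p \<in> I \<Longrightarrow> f p \<noteq> f (s p)"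
  using q3 xy modq by (cases p) (auto simp: I_def f_eq s_eq)

lemma ed_inj: "inj_on ed I"
proof (rule inj_onI)
  fix p p' assume "p \<in> I" "p' \<in> I" "ed p = ed p'"
  then show "p = p'"
    using q3 xy modq xy1 yx1 xq yq
    by (cases p; cases p') (auto simp: I_def ed_def f_eq s_eq doubleton_eq_iff split: if_splits)
qed


definition "P v = {p \<in> I. f p = v}"

lemma E_eq: "spiro_E q k x y = ed ` I"
proof -
  have "\<And>g. {g i j | i j. i < k \<and> j < q} = (\<lambda>(i,j). g i j) ` ({0..<k} \<times> {0..<q})" by (auto; blast)
  from this[of "\<lambda>i j. {spiro_rep k x y (i, j), spiro_rep k x y (i, (j + 1) mod q)}"]
  show ?thesis unfolding spiro_E_def ed_def I_def f_def s_def
    by (simp add: case_prod_beta')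
qed

lemma s_bij: "bij_betw s I I"
proof -
  have "inj_on s I" by (auto simp: inj_on_def s_def I_def mod_Suc split: if_splits)
  moreover have "s ` I = I"
  proof
    show "s ` I \<subseteq> I" using q3 by (auto simp: s_def I_def)
    show "I \<subseteq> s ` I"
    proof
      fix p assume "p \<in> I"
      then obtain i j where p: "p = (i,j)" "i < k" "j < q" by (auto simp: I_def)
      have "(i, (j + q - 1) mod q) \<in> I" using p q3 by (auto simp: I_def)
      moreover have "s (i, (j + q - 1) mod q) = p" using p q3
        by (auto simp: s_def mod_Suc_eq)
      ultimately show "p \<in> s ` I" by force
    qed
  qed
  ultimately show ?thesis by (simp add: bij_betw_def)
qed

lemma finI: "finite I" by (simp add: I_def)

lemma deg: "degree (ed ` I) v = 2 * card (P v)"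
proof -
  have "{e \<in> ed ` I. v \<in> e} = ed ` {p \<in> I. v \<in> ed p}" by auto
  hence "degree (ed ` I) v = card {p \<in> I. v \<in> ed p}"
    unfolding degree_def by (simp add: card_image inj_on_subset[OF ed_inj])
  also have "{p \<in> I. v \<in> ed p} = P v \<union> {p \<in> I. s p \<in> P v}"
    using s_bij unfolding P_def ed_def bij_betw_def by auto
  also have "card \<dots> = card (P v) + card {p \<in> I. s p \<in> P v}"
  proof (rule card_Un_disjoint)
    show "P v \<inter> {p \<in> I. s p \<in> P v} = {}"
    proof (rule ccontr)
      assume "P v \<inter> {p \<in> I. s p \<in> P v} \<noteq> {}"
      then obtain p where "p \<in> I" "f p = v" "f (s p) = v" unfolding P_def by blast
      with f_ne show False by metis
    qed
  qed (use finI in \<open>auto simp: P_def\<close>)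
  also have "card {p \<in> I. s p \<in> P v} = card (P v)"
  proof -
    have "s ` {p \<in> I. s p \<in> P v} = P v"
    proof
      show "s ` {p \<in> I. s p \<in> P v} \<subseteq> P v" by auto
      show "P v \<subseteq> s ` {p \<in> I. s p \<in> P v}"
      proof
        fix p' assume p': "p' \<in> P v"
        then have "p' \<in> s ` I" using s_bij by (simp add: P_def bij_betw_def)
        then obtain p where "p \<in> I" "p' = s p" by blast
        with p' show "p' \<in> s ` {p \<in> I. s p \<in> P v}" by blast
      qed
    qed
    moreover have "inj_on s {p \<in> I. s p \<in> P v}"
      by (rule inj_on_subset[of s I]) (use s_bij in \<open>auto simp: bij_betw_def\<close>)
    ultimately have "bij_betw s {p \<in> I. s p \<in> P v} (P v)" by (simp add: bij_betw_def)
    thus ?thesis by (rule bij_betw_same_card)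
  qed
  finally show ?thesis by simp
qed


definition "g p = (case p of (i,j) \<Rightarrow> (if 1 \<le> i \<and> j = x i then 1 else 0) + (if i+1 < k \<and> j = y i then 1 else (0::nat)))"

lemma cardP: assumes "p \<in> I" shows "card (P (f p)) = 1 + g p"
proof -
  obtain i j where p: "p = (i,j)" "i < k" "j < q" using assms by (auto simp: I_def)
  show ?thesis
  proof (cases "i+1<k \<and> j = y i")
    case True
    have "P (f p) = {(i, y i), (i+1, x(i+1))}"
      using True p xy xq by (auto simp: P_def I_def f_eq split: if_splits)
    thus ?thesis using True p xy[of i] by (auto simp: g_def)
  next
    case F1: False
    show ?thesis
    proof (cases "1 \<le> i \<and> j = x i")
      case True
      have "P (f p) = {(i-1, y (i-1)), (i, x i)}"
        using True F1 p xy yq by (auto simp: P_def I_def f_eq split: if_splits)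
      thus ?thesis using True F1 p xy by (auto simp: g_def card_insert_if)
    next
      case False
      have "P (f p) = {(i, j)}"
        using False F1 p xy by (auto simp: P_def I_def f_eq split: if_splits)
      thus ?thesis using False F1 p by (auto simp: g_def)
    qed
  qed
qed


lemma g_le: assumes "p \<in> I" shows "g p + g (s p) \<le> 1"
proof -
  obtain i j where p: "p = (i,j)" "i < k" "j < q" using assms by (auto simp: I_def)
  show ?thesis using p xy[of i] xy1[of i] yx1[of i] modq[of j]
    by (auto simp: g_def s_eq)
qed

lemma sum_g: "(\<Sum>p\<in>I. g p) = 2 * (k - 1)"
proof -
  have A: "(\<Sum>i<n. if 1 \<le> i then 1 else 0::nat) = n - 1" for n by (induction n) auto
  have B: "(\<Sum>i<n. if i < m then 1 else 0::nat) = min m n" for n m by (induction n) auto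
  have inner: "(\<Sum>j\<in>{0..<q}. g (i,j)) = (if 1 \<le> i then 1 else 0) + (if i < k - 1 then 1 else 0)"
    if "i < k" for i
  proof -
    have "(\<Sum>j\<in>{0..<q}. g (i,j)) = (\<Sum>j\<in>{0..<q}. if 1 \<le> i \<and> j = x i then 1 else 0)
       + (\<Sum>j\<in>{0..<q}. if i+1 < k \<and> j = y i then 1 else 0)"
      by (simp add: g_def sum.distrib)
    also have "\<dots> = (if 1 \<le> i then 1 else 0) + (if i < k - 1 then 1 else 0)"
      using xq[OF that] yq[OF that] by (cases "1 \<le> i"; cases "i+1<k") (auto simp: sum.delta')
    finally show ?thesis .
  qed
  have "(\<Sum>p\<in>I. g p) = (\<Sum>i\<in>{0..<k}. \<Sum>j\<in>{0..<q}. g (i,j))"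
    by (simp add: I_def sum.cartesian_product)
  also have "\<dots> = (\<Sum>i<k. (if 1 \<le> i then 1 else 0) + (if i < k - 1 then 1 else 0))"
    using inner by (simp add: atLeast0LessThan)
  also have "\<dots> = 2 * (k - 1)" using A[of k] B[of "k-1" k] by (simp add: sum.distrib)
  finally show ?thesis .
qed

lemma term_eq: assumes "a + b \<le> (1::nat)"
  shows "sqrt ((2 * (1 + real a))^2 + (2 * (1 + real b))^2)
         = 2 * sqrt 2 + (2 * sqrt 5 - 2 * sqrt 2) * (real a + real b)"
proof -
  have s8: "sqrt 8 = 2 * sqrt 2" using real_sqrt_mult[of 4 2] by simp
  have s20: "sqrt 20 = 2 * sqrt 5" using real_sqrt_mult[of 4 5] by simp
  from assms have "(a = 0 \<and> b = 0) \<or> (a = 1 \<and> b = 0) \<or> (a = 0 \<and> b = 1)" by auto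
  thus ?thesis using s8 s20 by (auto simp: power2_eq_square)
qed

lemma sombor_I: "sombor (ed ` I) = (2 * real q * real k - 8 * real k + 8) * sqrt 2 + (8 * real k - 8) * sqrt 5"
  if "k \<ge> 1"
proof -
  have "sombor (ed ` I) = (\<Sum>p\<in>I. sqrt (\<Sum>w\<in>ed p. (real (degree (ed ` I) w))^2))"
    unfolding sombor_def by (simp add: sum.reindex[OF ed_inj])
  also have "\<dots> = (\<Sum>p\<in>I. 2 * sqrt 2 + (2 * sqrt 5 - 2 * sqrt 2) * (real (g p) + real (g (s p))))"
  proof (rule sum.cong[OF refl])
    fix p assume p: "p \<in> I"
    have sp: "s p \<in> I" using s_bij p by (auto simp: bij_betw_def)
    have "(\<Sum>w\<in>ed p. (real (degree (ed ` I) w))^2)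
        = (real (degree (ed ` I) (f p)))^2 + (real (degree (ed ` I) (f (s p))))^2"
      using f_ne[OF p] by (simp add: ed_def)
    also have "\<dots> = (2 * (1 + real (g p)))^2 + (2 * (1 + real (g (s p))))^2"
      by (simp add: deg cardP[OF p] cardP[OF sp])
    finally show "sqrt (\<Sum>w\<in>ed p. (real (degree (ed ` I) w))^2) = 2 * sqrt 2 + (2 * sqrt 5 - 2 * sqrt 2) * (real (g p) + real (g (s p)))"
      using term_eq[OF g_le[OF p]] by simp
  qed
  also have "\<dots> = real (card I) * (2 * sqrt 2) + (2 * sqrt 5 - 2 * sqrt 2) * (real (\<Sum>p\<in>I. g p) + real (\<Sum>p\<in>I. g (s p)))"
    by (simp add: sum.distrib sum_distrib_left distrib_left)
  also have "(\<Sum>p\<in>I. g (s p)) = (\<Sum>p\<in>I. g p)"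
    using sum.reindex_bij_betw[OF s_bij, of g] .
  also have "card I = q * k" by (simp add: I_def)
  finally show ?thesis using that by (simp add: sum_g algebra_simps of_nat_diff)
qed

end

theorem mainTheorem7:
  fixes q h k :: nat and x y :: "nat \<Rightarrow> nat"
  assumes "q \<ge> 3" and "k \<ge> 1" and "h \<ge> 2" and "h \<le> q div 2"
    and "\<And>i. i < k \<Longrightarrow> x i < q \<and> y i < q \<and> cyc_dist q (x i) (y i) = h"
  shows "sombor (spiro_E q k x y)
      = (2 * real q * real k - 8 * real k + 8) * sqrt 2 + (8 * real k - 8) * sqrt 5"
proof -
  interpret spiro q k x y
  proof
    show "3 \<le> q" by fact
    fix i assume i: "i < k"
    from assms(5)[OF i] have a: "x i < q" "y i < q" "cyc_dist q (x i) (y i) = h" by auto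
    show "x i < q" "y i < q" by (fact a(1), fact a(2))
    show "x i \<noteq> y i" "y i \<noteq> Suc (x i) mod q" "x i \<noteq> Suc (y i) mod q"
      using cyc_facts[OF assms(1) a(1) a(2) a(3) assms(3)] by auto
  qed
  show ?thesis using E_eq sombor_I[OF assms(2)] by simp
qed

end
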